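(* Let $\{x^k\}$ be generated by Algorithm IRG with the backtracking stepsize rule. Assume $\inf_k f(x^k)>-\infty$ and $\rho_k\to0$ as $k\to\infty$. Then: (i) $\varepsilon_k\downarrow0$ and $r_k\downarrow0$; (ii) every accumulation point of $\{x^k\}$ is a stationary point of $f$; (iii) if $\{x^k\}$ is bounded, its set of accumulation points is nonempty, compact and connected; (iv) if $\{x^k\}$ has an isolated accumulation point, then the whole sequence $\{x^k\}$ converges to it.
   Context: Algorithm IRG (general inexact reduced gradient framework). Let $f:\mathbb R^n\to\mathbb R$ be continuously differentiable. Parameters: initial point $x^1\in\mathbb R^n$, initial radii $\varepsilon_1>0$, $r_1>0$, reduction factors $\mu,\theta\in(0,1)$, and a sequence $\{\rho_k\}$ of positive numbers. For $k=1,2,\dots$: (1) choose $g^k\in\mathbb R^n$ with $\|g^k-\nabla f(x^k)\|\le\min\{\varepsilon_k,\rho_k\}$; (2) if $\|g^k\|\le r_k+\varepsilon_k$, set $r_{k+1}=\mu r_k$, $\varepsilon_{k+1}=\theta\varepsilon_k$, $d^k=0$; otherwise set $r_{k+1}=r_k$, $\varepsilon_{k+1}=\varepsilon_k$ and $d^k=-\frac{\|g^k\|-\varepsilon_k}{\|g^k\|}g^k$; (3) choose a stepsize $t_k>0$ by some rule; (4) set $x^{k+1}=x^k+t_kd^k$. Backtracking stepsize rule: fix $\beta,\gamma,\tau\in(0,1)$; if $d^k=0$ set $t_k=\tau$; otherwise $t_k=\max\{t\in\{1,\gamma,\gamma^2,\dots\}: f(x^k+td^k)\le f(x^k)-\beta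 t\|d^k\|^2\}$. *)

theory Defs
  imports "HOL-Analysis.Analysis"
begin

definition acc_points :: "(nat \<Rightarrow> 'a::metric_space) \<Rightarrow> 'a set" where
  "acc_points x = {a. \<exists>h. strict_mono h \<and> (x \<circ> h) \<longlonglongrightarrow> a}"

definition armijo :: "('a::real_inner \<Rightarrow> real) \<Rightarrow> real \<Rightarrow> 'a \<Rightarrow> 'a \<Rightarrow> real \<Rightarrow> bool" where
  "armijo f \<beta> xk dk t \<longleftrightarrow> f (xk + t *\<^sub>R dk) \<le> f xk - \<beta> * t * (norm dk)\<^sup>2"

end

theory Submission
  imports Defs "HOL-Library.Infinite_Set"
begin


lemma acc_points_iff:
  fixes x :: "nat \<Rightarrow> 'a::metric_space"
  shows "a \<in> acc_points x \<longleftrightarrow> (\<forall>e>0. \<forall>N. \<exists>k\<ge>N. dist (x k) a < e)"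
proof
  assume "a \<in> acc_points x"
  then obtain h where h: "strict_mono h" "(x \<circ> h) \<longlonglongrightarrow> a" by (auto simp: acc_points_def)
  show "\<forall>e>0. \<forall>N. \<exists>k\<ge>N. dist (x k) a < e"
  proof (intro allI impI)
    fix e :: real and N assume "e > 0"
    then obtain M where M: "\<And>n. n \<ge> M \<Longrightarrow> dist ((x \<circ> h) n) a < e"
      using h(2) unfolding lim_sequentially by blast
    have "h (max M N) \<ge> N" using seq_suble[OF h(1), of "max M N"] by linarith
    moreover have "dist (x (h (max M N))) a < e" using M[of "max M N"] by simp
    ultimately show "\<exists>k\<ge>N. dist (x k) a < e" by blast
  qed
next
  assume H: "\<forall>e>0. \<forall>N. \<exists>k\<ge>N. dist (x k) a < e"
  have "\<exists>h. \<forall>n. dist (x (h n)) a < inverse (real n + 1) \<and> h n < h (Suc n)"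
  proof (rule dependent_nat_choice)
    have "inverse (real 0 + 1) > (0::real)" by simp
    then show "\<exists>k. dist (x k) a < inverse (real 0 + 1)" using H by blast
  next
    fix k n assume "dist (x k) a < inverse (real n + 1)"
    have "inverse (real (Suc n) + 1) > 0" by simp
    then obtain k' where "k' \<ge> Suc k" "dist (x k') a < inverse (real (Suc n) + 1)"
      using H by blast
    then show "\<exists>k'. dist (x k') a < inverse (real (Suc n) + 1) \<and> k < k'" by auto
  qed
  then obtain h where h: "\<And>n. dist (x (h n)) a < inverse (real n + 1)" "\<And>n. h n < h (Suc n)" by blast
  have "strict_mono h" using h(2) by (simp add: strict_mono_Suc_iff)
  moreover have "(\<lambda>n. dist ((x \<circ> h) n) a) \<longlonglongrightarrow> 0"
  proof (rule tendsto_sandwich[where f="\<lambda>_. 0" and h="\<lambda>n. inverse (real n + 1)"])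
    show "\<forall>\<^sub>F n in sequentially. 0 \<le> dist ((x \<circ> h) n) a" by simp
    have "\<And>n. dist ((x \<circ> h) n) a \<le> inverse (real n + 1)" using less_imp_le[OF h(1)] by simp
    then show "\<forall>\<^sub>F n in sequentially. dist ((x \<circ> h) n) a \<le> inverse (real n + 1)"
      by (rule always_eventually[OF allI])
    show "(\<lambda>_. 0::real) \<longlonglongrightarrow> 0" by (rule tendsto_const)
    show "(\<lambda>n. inverse (real n + 1)) \<longlonglongrightarrow> 0" using LIMSEQ_inverse_real_of_nat_add[of 0] by (simp add: add.commute)
  qed
  then have "(x \<circ> h) \<longlonglongrightarrow> a" by (rule tendsto_dist_iff[THEN iffD2])
  ultimately show "a \<in> acc_points x" unfolding acc_points_def by blast
qed

lemma acc_points_frequently_compact: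
  fixes x :: "nat \<Rightarrow> 'a::metric_space"
  assumes K: "compact K" and fr: "\<And>N. \<exists>k\<ge>N. x k \<in> K"
  shows "\<exists>b\<in>K. b \<in> acc_points x"
proof -
  let ?S = "{k. x k \<in> K}"
  have inf: "infinite ?S" using fr by (simp add: infinite_nat_iff_unbounded_le)
  have "\<forall>n. (x \<circ> enumerate ?S) n \<in> K" using enumerate_in_set[OF inf] by auto
  then obtain l r where lr: "l \<in> K" "strict_mono (r :: nat \<Rightarrow> nat)" "((x \<circ> enumerate ?S) \<circ> r) \<longlonglongrightarrow> l"
    using seq_compactE[OF compact_imp_seq_compact[OF K]] by blast
  have "strict_mono (enumerate ?S \<circ> r)"
    using strict_mono_enumerate[OF inf] \<open>strict_mono r\<close> by (simp add: strict_mono_o)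
  moreover have "(x \<circ> (enumerate ?S \<circ> r)) \<longlonglongrightarrow> l" using lr(3) by (simp add: comp_assoc)
  ultimately have "l \<in> acc_points x" unfolding acc_points_def by blast
  then show ?thesis using lr(1) by blast
qed




lemma isolated_acc_conv:
  fixes x :: "nat \<Rightarrow> 'a::euclidean_space"
  assumes steps: "(\<lambda>k. dist (x (Suc k)) (x k)) \<longlonglongrightarrow> 0"
    and a: "a \<in> acc_points x" and e: "e > 0"
    and iso: "\<forall>b \<in> acc_points x. dist b a < e \<longrightarrow> b = a"
  shows "x \<longlonglongrightarrow> a"
proof (rule ccontr)
  assume nc: "\<not> x \<longlonglongrightarrow> a"
  then obtain \<epsilon> where \<epsilon>: "\<epsilon> > 0" "\<And>N. \<exists>k\<ge>N. \<not> dist (x k) a < \<epsilon>"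
    unfolding lim_sequentially by blast
  define c where "c = min \<epsilon> (e/2)"
  have c: "c > 0" "c \<le> \<epsilon>" "c < e" using \<epsilon>(1) e by (auto simp: c_def)
  have st: "\<forall>r>0. \<exists>no. \<forall>n\<ge>no. dist (x (Suc n)) (x n) < r"
    using steps unfolding lim_sequentially by (simp add: dist_real_def)
  have "c/4 > 0" using c by simp
  then obtain M where M: "\<And>k. k \<ge> M \<Longrightarrow> dist (x (Suc k)) (x k) < c/4"
    using st by blast
  have fr: "\<exists>k\<ge>N. x k \<in> cball a c - ball a (c/2)" for N
  proof -
    have "c/2 > 0" using c by simp
    then obtain k1 where k1: "k1 \<ge> max N M" "dist (x k1) a < c/2"
      using a unfolding acc_points_iff by blast
    show ?thesis
    proof (rule ccontr)
      assume no: "\<not> (\<exists>k\<ge>N. x k \<in> cball a c - ball a (c/2))"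
      have all: "dist (x k) a < c/2" if "k \<ge> k1" for k
        using that
      proof (induction k rule: dec_induct)
        case base
        show ?case using k1 by simp
      next
        case (step k)
        have "dist (x (Suc k)) a \<le> dist (x (Suc k)) (x k) + dist (x k) a" by (rule dist_triangle)
        also have "\<dots> < c/4 + c/2" using M[of k] step k1 by simp
        finally have "dist (x (Suc k)) a < c" using c by simp
        moreover have "\<not> (x (Suc k) \<in> cball a c - ball a (c/2))" using no step k1 by auto
        ultimately show ?case by (auto simp: dist_commute)
      qed
      obtain k where "k \<ge> k1" "\<not> dist (x k) a < \<epsilon>" using \<epsilon>(2) by blast
      then show False using all[of k] c by simp
    qed
  qed
  have "compact (cball a c - ball a (c/2))" by (intro compact_diff compact_cball open_ball)
  then obtain b where b: "b \<in> cball a c - ball a (c/2)" "b \<in> acc_points x"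
    using acc_points_frequently_compact[OF _ fr] by blast
  have "dist b a < e" using b(1) c by (auto simp: dist_commute)
  then have "b = a" using iso b(2) by blast
  then show False using b(1) c by simp
qed

lemma acc_points_bounded:
  fixes x :: "nat \<Rightarrow> 'a::euclidean_space"
  assumes bdd: "bounded (range x)"
    and steps: "(\<lambda>k. dist (x (Suc k)) (x k)) \<longlonglongrightarrow> 0"
  shows "acc_points x \<noteq> {} \<and> compact (acc_points x) \<and> connected (acc_points x)"
proof -
  define U where "U N = (\<Union>k\<in>{N..}. closed_segment (x k) (x (Suc k)))" for N
  define T where "T N = closure (U N)" for N
  obtain B where B: "\<And>k. x k \<in> cball 0 B"
    using bdd unfolding bounded_iff by (auto simp: dist_norm)
  have TB: "T N \<subseteq> cball 0 B" for N
  proof -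
    have "U N \<subseteq> cball 0 B" unfolding U_def
      using closed_segment_subset[OF B B convex_cball] by blast
    then show ?thesis unfolding T_def by (simp add: closure_minimal)
  qed
  have Tcomp: "compact (T N)" for N
  proof -
    have "bounded (T N)" using bounded_subset[OF bounded_cball TB] .
    moreover have "closed (T N)" unfolding T_def by simp
    ultimately show ?thesis unfolding compact_eq_bounded_closed by blast
  qed
  have Tmono: "T M \<subseteq> T N" if "N \<le> M" for N M
  proof -
    have "U M \<subseteq> U N" unfolding U_def using that by (intro UN_mono) auto
    then show ?thesis unfolding T_def by (rule closure_mono)
  qed
  have Uconn: "connected (U N)" for N
  proof -
    define P where "P m = (\<Union>k\<in>{N..N+m}. closed_segment (x k) (x (Suc k)))" for m
    have Pc: "connected (P m) \<and> x N \<in> P m" for m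
    proof (induction m)
      case 0
      show ?case by (simp add: P_def)
    next
      case (Suc m)
      have iv: "{N..N + Suc m} = insert (Suc (N+m)) {N..N+m}" by (simp add: atLeastAtMostSuc_conv)
      have eq: "P (Suc m) = closed_segment (x (Suc (N+m))) (x (Suc (Suc (N+m)))) \<union> P m"
        unfolding P_def iv by simp
      have "x (Suc (N+m)) \<in> closed_segment (x (N+m)) (x (Suc (N+m)))" by simp
      then have "x (Suc (N+m)) \<in> P m" unfolding P_def by (intro UN_I[of "N+m"]) auto
      then have "closed_segment (x (Suc (N+m))) (x (Suc (Suc (N+m)))) \<inter> P m \<noteq> {}" by auto
      then have "connected (P (Suc m))" unfolding eq using Suc.IH by (intro connected_Un) auto
      moreover have "x N \<in> P (Suc m)" using Suc.IH eq by auto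
      ultimately show ?case by blast
    qed
    have "U N = \<Union>(range P)"
    proof
      show "U N \<subseteq> \<Union>(range P)"
      proof
        fix y assume "y \<in> U N"
        then obtain k where k: "k \<ge> N" "y \<in> closed_segment (x k) (x (Suc k))" unfolding U_def by blast
        then have "y \<in> P (k - N)" unfolding P_def by (intro UN_I[of k]) auto
        then show "y \<in> \<Union>(range P)" by blast
      qed
      show "\<Union>(range P) \<subseteq> U N"
      proof
        fix y assume "y \<in> \<Union>(range P)"
        then obtain m k where k: "k \<in> {N..N+m}" "y \<in> closed_segment (x k) (x (Suc k))"
          unfolding P_def by blast
        then show "y \<in> U N" unfolding U_def by (intro UN_I[of k]) auto
      qed
    qed
    moreover have "connected (\<Union>(range P))"
      by (rule connected_Union) (use Pc in auto)
    ultimately show ?thesis by simp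
  qed
  have Tconn: "connected (T N)" for N unfolding T_def by (rule connected_imp_connected_closure[OF Uconn])
  have eqI: "acc_points x = \<Inter>(range T)"
  proof
    show "acc_points x \<subseteq> \<Inter>(range T)"
    proof
      fix a assume a: "a \<in> acc_points x"
      have "a \<in> T N" for N unfolding T_def closure_approachable
      proof (intro allI impI)
        fix e :: real assume "e > 0"
        then obtain k where "k \<ge> N" "dist (x k) a < e" using a unfolding acc_points_iff by blast
        moreover have "x k \<in> U N" unfolding U_def using \<open>k \<ge> N\<close> by auto
        ultimately show "\<exists>y\<in>U N. dist y a < e" by blast
      qed
      then show "a \<in> \<Inter>(range T)" by blast
    qed
  next
    show "\<Inter>(range T) \<subseteq> acc_points x"
    proof
      fix y assume y: "y \<in> \<Inter>(range T)"
      show "y \<in> acc_points x" unfolding acc_points_iff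
      proof (intro allI impI)
        fix e :: real and N assume e: "e > 0"
        then have "e/2 > 0" by simp
        have st: "\<forall>r>0. \<exists>no. \<forall>n\<ge>no. dist (x (Suc n)) (x n) < r"
          using steps unfolding lim_sequentially by (simp add: dist_real_def)
        obtain M where M: "\<And>k. k \<ge> M \<Longrightarrow> dist (x (Suc k)) (x k) < e/2"
          using st \<open>e/2 > 0\<close> by blast
        have "y \<in> T (max N M)" using y by blast
        then obtain z where z: "z \<in> U (max N M)" "dist z y < e/2"
          unfolding T_def closure_approachable using \<open>e/2 > 0\<close> by blast
        then obtain k where k: "k \<ge> max N M" "z \<in> closed_segment (x k) (x (Suc k))"
          unfolding U_def by blast
        have "dist z (x k) \<le> dist (x k) (x (Suc k))" using dist_in_closed_segment[OF k(2)] by blast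
        also have "\<dots> < e/2" using M[of k] k(1) by (simp add: dist_commute)
        finally have "dist (x k) y < e" using z(2) dist_triangle[of "x k" y z]
          by (simp add: dist_commute)
        then show "\<exists>k\<ge>N. dist (x k) y < e" using k(1) by auto
      qed
    qed
  qed
  have ne: "acc_points x \<noteq> {}"
  proof -
    have "compact (closure (range x))" using bdd by simp
    moreover have "\<And>N. \<exists>k\<ge>N. x k \<in> closure (range x)" using closure_subset by blast
    ultimately show ?thesis using acc_points_frequently_compact by blast
  qed
  have "compact (\<Inter>(range T))"
    by (rule compact_Inter) (use Tcomp in auto)
  moreover have "connected (\<Inter>(range T))"
  proof (rule connected_chain)
    show "compact S \<and> connected S" if "S \<in> range T" for S using that Tcomp Tconn by auto
    show "S \<subseteq> S' \<or> S' \<subseteq> S" if "S \<in> range T \<and> S' \<in> range T" for S S'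
      using that Tmono nat_le_linear by blast
  qed
  ultimately show ?thesis using ne eqI by simp
qed




locale irg =
  fixes f :: "'a::euclidean_space \<Rightarrow> real"
    and grad :: "'a \<Rightarrow> 'a"
    and x g d :: "nat \<Rightarrow> 'a"
    and eps r t rho :: "nat \<Rightarrow> real"
    and \<mu> \<theta> \<beta> \<gamma> \<tau> :: real
  assumes f_grad: "\<And>y. (f has_derivative (\<lambda>h. grad y \<bullet> h)) (at y)"
    and grad_cont: "continuous_on UNIV grad"
    and eps0: "eps 0 > 0" and r0: "r 0 > 0"
    and mu: "0 < \<mu>" "\<mu> < 1" and theta: "0 < \<theta>" "\<theta> < 1"
    and rho_pos: "\<And>k. rho k > 0"
    and beta: "0 < \<beta>" "\<beta> < 1" and gamma: "0 < \<gamma>" "\<gamma> < 1"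
    and tau: "0 < \<tau>" "\<tau> < 1"
    and step1: "\<And>k. norm (g k - grad (x k)) \<le> min (eps k) (rho k)"
    and step2: "\<And>k. if norm (g k) \<le> r k + eps k
        then r (Suc k) = \<mu> * r k \<and> eps (Suc k) = \<theta> * eps k \<and> d k = 0
        else r (Suc k) = r k \<and> eps (Suc k) = eps k \<and>
             d k = - (((norm (g k) - eps k) / norm (g k)) *\<^sub>R g k)"
    and stepsize: "\<And>k. if d k = 0 then t k = \<tau>
        else (\<exists>j::nat. t k = \<gamma> ^ j \<and> armijo f \<beta> (x k) (d k) (\<gamma> ^ j) \<and>
                 (\<forall>i<j. \<not> armijo f \<beta> (x k) (d k) (\<gamma> ^ i)))"
    and update: "\<And>k. x (Suc k) = x k + t k *\<^sub>R d k"
    and f_bdd: "bdd_below (range (\<lambda>k. f (x k)))"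
    and rho_lim: "rho \<longlonglongrightarrow> 0"
begin

lemma pos: "eps k > 0 \<and> r k > 0"
proof (induction k)
  case 0 then show ?case using eps0 r0 by simp
next
  case (Suc k) then show ?case using step2[of k] mu theta by (auto split: if_splits)
qed

lemma decs: "eps (Suc k) \<le> eps k" "r (Suc k) \<le> r k"
  using step2[of k] pos[of k] mu theta by (auto split: if_splits simp: mult_le_cancel_right1)

lemma nonnull:
  assumes "d k \<noteq> 0"
  shows "norm (g k) > r k + eps k" "d k = - (((norm (g k) - eps k) / norm (g k)) *\<^sub>R g k)"
    "eps (Suc k) = eps k" "r (Suc k) = r k" "norm (d k) = norm (g k) - eps k"
proof -
  show gt: "norm (g k) > r k + eps k" using step2[of k] assms by (auto split: if_splits)
  show dk: "d k = - (((norm (g k) - eps k) / norm (g k)) *\<^sub>R g k)"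
    "eps (Suc k) = eps k" "r (Suc k) = r k" using step2[of k] gt by (auto split: if_splits)
  have pk: "eps k > 0" "r k > 0" using pos[of k] by auto
  have g0: "norm (g k) > 0" using gt pk by linarith
  have "norm (d k) = \<bar>(norm (g k) - eps k) / norm (g k)\<bar> * norm (g k)" using dk(1) by simp
  also have "\<bar>(norm (g k) - eps k) / norm (g k)\<bar> * norm (g k) = (norm (g k) - eps k) / norm (g k) * norm (g k)"
  proof -
    have "norm (g k) - eps k \<ge> 0" using gt pk by simp
    then show ?thesis by simp
  qed
  also have "\<dots> = norm (g k) - eps k" using g0 by simp
  finally show "norm (d k) = norm (g k) - eps k" .
qed

lemma null_iff: "d k = 0 \<longleftrightarrow> norm (g k) \<le> r k + eps k"
proof
  assume "d k = 0" then show "norm (g k) \<le> r k + eps k"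
    using step2[of k] pos[of k] by (auto split: if_splits)
next
  assume "norm (g k) \<le> r k + eps k" then show "d k = 0"
    using step2[of k] by (auto split: if_splits)
qed

lemma t_props:
  "t k > 0"
  "d k \<noteq> 0 \<Longrightarrow> t k \<le> 1"
  "d k \<noteq> 0 \<Longrightarrow> armijo f \<beta> (x k) (d k) (t k)"
  "d k \<noteq> 0 \<Longrightarrow> t k < 1 \<Longrightarrow> \<not> armijo f \<beta> (x k) (d k) (t k / \<gamma>)"
proof -
  show "t k > 0"
  proof (cases "d k = 0")
    case True then show ?thesis using stepsize[of k] tau by simp
  next
    case False then obtain j where "t k = \<gamma> ^ j" using stepsize[of k] by auto
    then show ?thesis using gamma by simp
  qed
  assume nz: "d k \<noteq> 0"
  then obtain j where j: "t k = \<gamma> ^ j" "armijo f \<beta> (x k) (d k) (\<gamma> ^ j)"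
    "\<forall>i<j. \<not> armijo f \<beta> (x k) (d k) (\<gamma> ^ i)" using stepsize[of k] by auto
  show "t k \<le> 1" using j(1) gamma by (simp add: power_le_one)
  show "armijo f \<beta> (x k) (d k) (t k)" using j by simp
  assume "t k < 1"
  then have "j \<noteq> 0" using j(1) by (cases j) auto
  then obtain i where i: "j = Suc i" using not0_implies_Suc by blast
  have "t k / \<gamma> = \<gamma> ^ i" using j(1) i gamma by simp
  then show "\<not> armijo f \<beta> (x k) (d k) (t k / \<gamma>)" using j(3) i by simp
qed

lemma decrease: "f (x (Suc k)) \<le> f (x k) - \<beta> * t k * (norm (d k))\<^sup>2"
proof (cases "d k = 0")
  case True then show ?thesis using update[of k] by simp
next
  case False then show ?thesis using t_props(3)[OF False] update[of k] by (simp add: armijo_def)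
qed

definition s :: "nat \<Rightarrow> real" where "s k = t k * (norm (d k))\<^sup>2"

lemma s_nonneg: "s k \<ge> 0"
  unfolding s_def using t_props(1)[of k] by simp

lemma s_summable: "summable s"
proof -
  obtain m where m: "\<And>k. m \<le> f (x k)" using f_bdd unfolding bdd_below_def by auto
  have le: "f (x n) \<le> f (x 0) - \<beta> * (\<Sum>k<n. s k)" for n
  proof (induction n)
    case 0 then show ?case by simp
  next
    case (Suc n)
    have "f (x (Suc n)) \<le> f (x n) - \<beta> * s n" using decrease[of n] by (simp add: s_def mult.assoc)
    also have "\<dots> \<le> f (x 0) - \<beta> * (\<Sum>k<Suc n. s k)" using Suc by (simp add: algebra_simps)
    finally show ?case .
  qed
  have "(\<Sum>k<n. s k) \<le> (f (x 0) - m) / \<beta>" for n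
    using le[of n] m[of n] beta by (simp add: field_simps)
  then show ?thesis using s_nonneg by (intro summableI_nonneg_bounded) auto
qed

lemma s_lim: "s \<longlonglongrightarrow> 0"
  using summable_LIMSEQ_zero[OF s_summable] .

lemma step_le: "dist (x (Suc k)) (x k) \<le> sqrt (s k)"
proof (cases "d k = 0")
  case True then show ?thesis using update[of k] s_nonneg[of k] by simp
next
  case False
  have t: "0 < t k" "t k \<le> 1" using t_props(2)[OF False] t_props(1)[of k] by auto
  have dd: "dist (x (Suc k)) (x k) = t k * norm (d k)" using update[of k] t by (simp add: dist_norm)
  have "(t k * norm (d k))\<^sup>2 = t k * (t k * (norm (d k))\<^sup>2)" by (simp add: power2_eq_square)
  also have "\<dots> \<le> 1 * (t k * (norm (d k))\<^sup>2)" using t by (intro mult_right_mono) auto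
  finally have "(t k * norm (d k))\<^sup>2 \<le> s k" by (simp add: s_def)
  then show ?thesis unfolding dd by (rule real_le_rsqrt)
qed

lemma steps: "(\<lambda>k. dist (x (Suc k)) (x k)) \<longlonglongrightarrow> 0"
proof (rule tendsto_sandwich[where f="\<lambda>_. 0" and h="\<lambda>k. sqrt (s k)"])
  show "\<forall>\<^sub>F n in sequentially. 0 \<le> dist (x (Suc n)) (x n)" by simp
  show "\<forall>\<^sub>F n in sequentially. dist (x (Suc n)) (x n) \<le> sqrt (s n)"
    using step_le by (intro always_eventually allI)
  show "(\<lambda>_. 0::real) \<longlonglongrightarrow> 0" by (rule tendsto_const)
  show "(\<lambda>k. sqrt (s k)) \<longlonglongrightarrow> 0" using tendsto_real_sqrt[OF s_lim] by simp
qed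

lemma descent:
  assumes nz: "d k \<noteq> 0"
  shows "grad (x k) \<bullet> d k \<le> - (norm (d k))\<^sup>2"
proof -
  let ?G = "g k" and ?e = "eps k"
  define lam where "lam = (norm ?G - ?e) / norm ?G"
  have gt: "norm ?G > r k + ?e" and dk: "d k = - (lam *\<^sub>R ?G)" and nd: "norm (d k) = norm ?G - ?e"
    using nonnull[OF nz] by (auto simp: lam_def)
  have pk: "?e > 0" "r k > 0" using pos[of k] by auto
  have G0: "norm ?G > 0" using gt pk by linarith
  have lamG: "lam * norm ?G = norm ?G - ?e" using G0 by (simp add: lam_def)
  have "grad (x k) \<bullet> d k = ?G \<bullet> d k + (grad (x k) - ?G) \<bullet> d k" by (simp add: inner_diff_left)
  also have "?G \<bullet> d k = - (lam * (norm ?G)\<^sup>2)" unfolding dk by (simp add: power2_norm_eq_inner)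
  also have "(grad (x k) - ?G) \<bullet> d k \<le> norm (grad (x k) - ?G) * norm (d k)" by (rule norm_cauchy_schwarz)
  also have "norm (grad (x k) - ?G) \<le> ?e" using step1[of k] by (simp add: norm_minus_commute)
  then have "norm (grad (x k) - ?G) * norm (d k) \<le> ?e * norm (d k)" by (intro mult_right_mono) auto
  finally have "grad (x k) \<bullet> d k \<le> - (lam * (norm ?G)\<^sup>2) + ?e * norm (d k)" by simp
  also have "lam * (norm ?G)\<^sup>2 = (norm ?G - ?e) * norm ?G" using lamG by (simp add: power2_eq_square mult.assoc[symmetric])
  finally show ?thesis unfolding nd by (simp add: power2_eq_square algebra_simps)
qed

lemma line_deriv:
  "((\<lambda>u. f (y + u *\<^sub>R v)) has_real_derivative (grad (y + u *\<^sub>R v) \<bullet> v)) (at u)"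
proof -
  have l: "((\<lambda>u. y + u *\<^sub>R v) has_derivative (\<lambda>h. h *\<^sub>R v)) (at u)"
    by (auto intro!: derivative_eq_intros)
  have "((\<lambda>u. f (y + u *\<^sub>R v)) has_derivative (\<lambda>h. grad (y + u *\<^sub>R v) \<bullet> (h *\<^sub>R v))) (at u)"
    using has_derivative_compose[OF l f_grad] .
  moreover have "(\<lambda>h. grad (y + u *\<^sub>R v) \<bullet> (h *\<^sub>R v)) = (*) (grad (y + u *\<^sub>R v) \<bullet> v)"
    by (auto simp: mult.commute)
  ultimately show ?thesis unfolding has_field_derivative_def by simp
qed

end



context irg begin

lemma KL:
  assumes c: "c > 0"
  shows "\<exists>\<epsilon>0>0. \<forall>k. dist (x k) a < 1/2 \<longrightarrow> d k \<noteq> 0 \<longrightarrow> s k < \<epsilon>0 \<longrightarrow> norm (d k) < c"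
proof -
  have uc: "uniformly_continuous_on (cball a 1) grad"
    using compact_uniformly_continuous[OF continuous_on_subset[OF grad_cont] compact_cball] by simp
  have "(1-\<beta>)*c > 0" using beta c by simp
  then obtain \<delta> where \<delta>: "\<delta> > 0"
    "\<And>u v. u \<in> cball a 1 \<Longrightarrow> v \<in> cball a 1 \<Longrightarrow> dist v u < \<delta> \<Longrightarrow> dist (grad v) (grad u) < (1-\<beta>)*c"
    using uc unfolding uniformly_continuous_on_def by metis
  have "compact (grad ` cball a 1)"
    using compact_continuous_image[OF continuous_on_subset[OF grad_cont] compact_cball] by simp
  then have "bounded (grad ` cball a 1)" by (rule compact_imp_bounded)
  then obtain M where M0: "M > 0" and Mb: "\<forall>y\<in>grad ` cball a 1. norm y \<le> M"
    unfolding bounded_pos by blast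
  have M: "M > 0" "\<And>u. u \<in> cball a 1 \<Longrightarrow> norm (grad u) \<le> M" using M0 Mb by auto
  define \<eta> where "\<eta> = min \<delta> (1/2)"
  have \<eta>: "\<eta> > 0" "\<eta> \<le> \<delta>" "\<eta> \<le> 1/2" using \<delta> by (auto simp: \<eta>_def)
  define \<epsilon>0 where "\<epsilon>0 = \<gamma> * c\<^sup>2 * \<eta> / (2*(M+1))"
  have \<epsilon>0: "\<epsilon>0 > 0" using gamma c \<eta> M by (simp add: \<epsilon>0_def)
  have "\<forall>k. dist (x k) a < 1/2 \<longrightarrow> d k \<noteq> 0 \<longrightarrow> s k < \<epsilon>0 \<longrightarrow> norm (d k) < c"
  proof (intro allI impI)
    fix k assume xk: "dist (x k) a < 1/2" and nz: "d k \<noteq> 0" and sk: "s k < \<epsilon>0"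
    show "norm (d k) < c"
    proof (rule ccontr)
      assume "\<not> norm (d k) < c"
      then have ndc: "norm (d k) \<ge> c" by simp
      let ?nd = "norm (d k)"
      have xkB: "x k \<in> cball a 1" using xk by (simp add: dist_commute)
      have tk: "t k > 0" using t_props(1) by simp
      have ndM: "?nd \<le> M"
      proof -
        have "norm (g k) \<le> norm (grad (x k)) + norm (g k - grad (x k))"
          by (rule norm_triangle_sub)
        also have "\<dots> \<le> M + eps k" using M(2)[OF xkB] step1[of k] by simp
        finally show ?thesis using nonnull(5)[OF nz] by simp
      qed
      have "c\<^sup>2 \<le> ?nd\<^sup>2" using ndc c by (simp add: power_mono)
      then have "t k * c\<^sup>2 \<le> s k" unfolding s_def using tk by (simp add: mult_left_mono)
      then have "t k * c\<^sup>2 < \<epsilon>0" using sk by simp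
      moreover have "\<epsilon>0 = (\<gamma> * \<eta> / (2*(M+1))) * c\<^sup>2" by (simp add: \<epsilon>0_def mult_ac)
      ultimately have "t k * c\<^sup>2 < (\<gamma> * \<eta> / (2*(M+1))) * c\<^sup>2" by simp
      then have tlt: "t k < \<gamma> * \<eta> / (2*(M+1))" by (rule mult_right_less_imp_less) simp
      have "\<gamma> * \<eta> < \<gamma> * (2*(M+1))" using gamma \<eta> M by (intro mult_strict_left_mono) auto
      then have "\<gamma> * \<eta> / (2*(M+1)) < \<gamma>" using pos_divide_less_eq[of "2*(M+1)" "\<gamma> * \<eta>" \<gamma>] M
        by (simp add: mult.commute)
      then have t1: "t k < 1" using tlt gamma by simp
      define \<sigma> where "\<sigma> = t k / \<gamma>"
      have \<sigma>: "\<sigma> > 0" "\<sigma> < \<eta> / (2*(M+1))" using tk tlt gamma by (auto simp: \<sigma>_def field_simps)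
      have na: "\<not> armijo f \<beta> (x k) (d k) \<sigma>" using t_props(4)[OF nz t1] by (simp add: \<sigma>_def)
      then have fail: "f (x k + \<sigma> *\<^sub>R d k) - f (x k) > - \<beta> * \<sigma> * ?nd\<^sup>2"
        unfolding armijo_def by simp
      obtain z where z: "0 < z" "z < \<sigma>"
        "f (x k + \<sigma> *\<^sub>R d k) - f (x k + 0 *\<^sub>R d k) = (\<sigma> - 0) * (grad (x k + z *\<^sub>R d k) \<bullet> d k)"
        using MVT2[OF \<sigma>(1), of "\<lambda>u. f (x k + u *\<^sub>R d k)" "\<lambda>u. grad (x k + u *\<^sub>R d k) \<bullet> d k"]
          line_deriv by blast
      define \<xi> where "\<xi> = x k + z *\<^sub>R d k"
      have "\<sigma> * (grad \<xi> \<bullet> d k) > \<sigma> * (- \<beta> * ?nd\<^sup>2)" using fail z(3) by (simp add: \<xi>_def mult_ac)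
      then have g\<xi>: "grad \<xi> \<bullet> d k > - \<beta> * ?nd\<^sup>2" by (rule mult_left_less_imp_less) (use \<sigma>(1) in simp)
      have dist\<xi>: "dist \<xi> (x k) = z * ?nd" using z by (simp add: \<xi>_def dist_norm)
      have "z * ?nd \<le> \<sigma> * M" using z ndM by (intro mult_mono) auto
      also have "\<sigma> * M < \<eta> / (2*(M+1)) * (M+1)" using \<sigma> M
        by (intro mult_strict_mono) auto
      also have "\<eta> / (2*(M+1)) * (M+1) = \<eta>/2" using M by (simp add: field_simps)
      finally have dlt: "dist \<xi> (x k) < \<eta>/2" unfolding dist\<xi> .
      have \<xi>B: "\<xi> \<in> cball a 1"
      proof -
        have "dist a \<xi> \<le> dist a (x k) + dist (x k) \<xi>" by (rule dist_triangle)
        also have "\<dots> < 1" using xk dlt \<eta> by (simp add: dist_commute)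
        finally show ?thesis by simp
      qed
      have "dist (grad \<xi>) (grad (x k)) < (1-\<beta>)*c"
        using \<delta>(2)[OF xkB \<xi>B] dlt \<eta> by simp
      then have ngd: "norm (grad \<xi> - grad (x k)) < (1-\<beta>)*c" by (simp add: dist_norm)
      have "(grad \<xi> - grad (x k)) \<bullet> d k > (1-\<beta>) * ?nd\<^sup>2"
        using g\<xi> descent[OF nz] by (simp add: inner_diff_left algebra_simps)
      moreover have "(grad \<xi> - grad (x k)) \<bullet> d k \<le> norm (grad \<xi> - grad (x k)) * ?nd"
        by (rule norm_cauchy_schwarz)
      moreover have "norm (grad \<xi> - grad (x k)) * ?nd \<le> (1-\<beta>)*c * ?nd"
        using ngd by (intro mult_right_mono) auto
      moreover have "(1-\<beta>)*c * ?nd \<le> (1-\<beta>) * ?nd\<^sup>2"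
      proof -
        have "c * ?nd \<le> ?nd * ?nd" using ndc c by (intro mult_right_mono) auto
        then have "(1-\<beta>) * (c * ?nd) \<le> (1-\<beta>) * (?nd * ?nd)" using beta by (intro mult_left_mono) auto
        then show ?thesis by (simp add: power2_eq_square mult.assoc)
      qed
      ultimately show False by linarith
    qed
  qed
  then show ?thesis using \<epsilon>0 by blast
qed

end



lemma lim_zero_generic:
  fixes e :: "nat \<Rightarrow> real"
  assumes dec: "decseq e" and pos: "\<And>k. e k > 0" and fr: "\<And>N. \<exists>k\<ge>N. e (Suc k) = q * e k"
    and q: "q < 1"
  shows "e \<longlonglongrightarrow> 0"
proof -
  obtain L where L: "e \<longlonglongrightarrow> L" "\<forall>i. L \<le> e i"
    using decseq_convergent[OF dec, of 0] pos less_imp_le by blast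
  have L0: "L \<ge> 0" using LIMSEQ_le_const[OF L(1), of 0] pos less_imp_le by blast
  have "L = 0"
  proof (rule ccontr)
    assume "L \<noteq> 0"
    then have Lp: "L > 0" using L0 by simp
    have "(\<lambda>k. e (Suc k) - q * e k) \<longlonglongrightarrow> L - q * L"
      by (intro tendsto_diff tendsto_mult_left L(1)[THEN LIMSEQ_Suc] L(1))
    moreover have "L - q * L > 0" using Lp q by (simp add: algebra_simps)
    ultimately have "eventually (\<lambda>k. 0 < e (Suc k) - q * e k) sequentially"
      by (rule order_tendstoD(1))
    then obtain N where "\<And>k. k \<ge> N \<Longrightarrow> 0 < e (Suc k) - q * e k"
      unfolding eventually_sequentially by blast
    moreover obtain k where "k \<ge> N" "e (Suc k) = q * e k" using fr by blast
    ultimately show False by fastforce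
  qed
  then show ?thesis using L(1) by simp
qed

context irg begin

lemma inf_null: "\<exists>k\<ge>N. d k = 0"
proof (rule ccontr)
  assume "\<not> (\<exists>k\<ge>N. d k = 0)"
  then have nn: "\<And>k. k \<ge> N \<Longrightarrow> d k \<noteq> 0" by blast
  have const: "r k = r N \<and> eps k = eps N" if "k \<ge> N" for k
    using that
  proof (induction k rule: dec_induct)
    case base then show ?case by simp
  next
    case (step k) then show ?case using nonnull(3,4)[OF nn[of k]] by simp
  qed
  have rN: "r N > 0" using pos[of N] by simp
  have ndgt: "norm (d k) > r N" if "k \<ge> N" for k
    using nonnull(1,5)[OF nn[OF that]] const[OF that] by simp
  have sum1: "summable (\<lambda>k. s k / r N)" using s_summable by (rule summable_divide)
  have le1: "norm (x (Suc k) - x k) \<le> s k / r N" if "k \<ge> N" for k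
  proof -
    have tk: "t k > 0" using t_props(1) by simp
    have nd: "norm (d k) > r N" using ndgt[OF that] .
    have "norm (x (Suc k) - x k) = t k * norm (d k)" using update[of k] tk by simp
    also have "\<dots> \<le> s k / r N"
    proof -
      have "t k * norm (d k) * r N \<le> t k * norm (d k) * norm (d k)"
        using tk nd rN by (intro mult_left_mono) auto
      then show ?thesis using rN by (simp add: s_def field_simps power2_eq_square)
    qed
    finally show ?thesis .
  qed
  have le2: "norm (norm (x (Suc k) - x k)) \<le> s k / r N" if "k \<ge> N" for k
    using le1[OF that] by simp
  have "summable (\<lambda>k. norm (x (Suc k) - x k))"
    by (rule summable_comparison_test'[OF sum1 le2])
  then have sm: "summable (\<lambda>k. x (Suc k) - x k)" by (rule summable_norm_cancel)
  have "(\<lambda>n. \<Sum>k<n. x (Suc k) - x k) \<longlonglongrightarrow> suminf (\<lambda>k. x (Suc k) - x k)"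
    using summable_LIMSEQ[OF sm] .
  then have "(\<lambda>n. x n - x 0) \<longlonglongrightarrow> suminf (\<lambda>k. x (Suc k) - x k)"
    by (simp add: sum_lessThan_telescope)
  then have "(\<lambda>n. x 0 + (x n - x 0)) \<longlonglongrightarrow> x 0 + suminf (\<lambda>k. x (Suc k) - x k)"
    by (intro tendsto_add tendsto_const)
  then have xa: "x \<longlonglongrightarrow> x 0 + suminf (\<lambda>k. x (Suc k) - x k)" by simp
  define a where "a = x 0 + suminf (\<lambda>k. x (Suc k) - x k)"
  obtain \<epsilon>0 where \<epsilon>0: "\<epsilon>0 > 0"
    "\<forall>k. dist (x k) a < 1/2 \<longrightarrow> d k \<noteq> 0 \<longrightarrow> s k < \<epsilon>0 \<longrightarrow> norm (d k) < r N"
    using KL[OF rN] by blast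
  have "eventually (\<lambda>k. dist (x k) a < 1/2) sequentially"
    using xa unfolding a_def by (intro tendstoD) auto
  moreover have "eventually (\<lambda>k. s k < \<epsilon>0) sequentially"
    using order_tendstoD(2)[OF s_lim \<epsilon>0(1)] .
  moreover have "eventually (\<lambda>k. k \<ge> N) sequentially" by (rule eventually_ge_at_top)
  ultimately have "eventually (\<lambda>k. dist (x k) a < 1/2 \<and> s k < \<epsilon>0 \<and> k \<ge> N) sequentially"
    by eventually_elim auto
  then obtain k where k: "dist (x k) a < 1/2" "s k < \<epsilon>0" "k \<ge> N"
    using eventually_happens'[OF sequentially_bot] by blast
  then have "norm (d k) < r N" using \<epsilon>0(2) nn[OF k(3)] by blast
  then show False using ndgt[OF k(3)] by simp
qed

lemma eps_r_lim: "decseq eps \<and> eps \<longlonglongrightarrow> 0 \<and> decseq r \<and> r \<longlonglongrightarrow> 0"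
proof -
  have de: "decseq eps" using decs(1) by (intro decseq_SucI) auto
  have dr: "decseq r" using decs(2) by (intro decseq_SucI) auto
  have both: "\<exists>k\<ge>N. eps (Suc k) = \<theta> * eps k \<and> r (Suc k) = \<mu> * r k" for N
  proof -
    obtain k where k: "k \<ge> N" "d k = 0" using inf_null by blast
    then have "norm (g k) \<le> r k + eps k" using null_iff by blast
    then have "eps (Suc k) = \<theta> * eps k \<and> r (Suc k) = \<mu> * r k" using step2[of k] by simp
    then show ?thesis using k(1) by blast
  qed
  have fe: "\<exists>k\<ge>N. eps (Suc k) = \<theta> * eps k" for N using both[of N] by blast
  have fr: "\<exists>k\<ge>N. r (Suc k) = \<mu> * r k" for N using both[of N] by blast
  have "eps \<longlonglongrightarrow> 0" using lim_zero_generic[OF de _ fe theta(2)] pos by blast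
  moreover have "r \<longlonglongrightarrow> 0" using lim_zero_generic[OF dr _ fr mu(2)] pos by blast
  ultimately show ?thesis using de dr by blast
qed

lemma stationary:
  assumes a: "a \<in> acc_points x"
  shows "grad a = 0"
proof (rule ccontr)
  assume ga: "grad a \<noteq> 0"
  obtain h where h: "strict_mono h" "(x \<circ> h) \<longlonglongrightarrow> a" using a by (auto simp: acc_points_def)
  define G where "G = norm (grad a)"
  have G: "G > 0" using ga by (simp add: G_def)
  have gx: "(\<lambda>j. grad (x (h j))) \<longlonglongrightarrow> grad a"
    using continuous_on_tendsto_compose[OF grad_cont h(2)] by (simp add: o_def)
  have rh: "(\<lambda>j. rho (h j)) \<longlonglongrightarrow> 0" using LIMSEQ_subseq_LIMSEQ[OF rho_lim h(1)] by (simp add: o_def)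
  have "(\<lambda>j. g (h j) - grad (x (h j))) \<longlonglongrightarrow> 0"
  proof (rule tendsto_norm_zero_cancel)
    show "(\<lambda>j. norm (g (h j) - grad (x (h j)))) \<longlonglongrightarrow> 0"
    proof (rule tendsto_sandwich[where f="\<lambda>_. 0" and h="\<lambda>j. rho (h j)"])
      show "\<forall>\<^sub>F n in sequentially. 0 \<le> norm (g (h n) - grad (x (h n)))" by simp
      show "\<forall>\<^sub>F n in sequentially. norm (g (h n) - grad (x (h n))) \<le> rho (h n)"
        using step1 by (intro always_eventually allI) (metis min.boundedE)
    qed (auto simp: rh)
  qed
  then have "(\<lambda>j. (g (h j) - grad (x (h j))) + grad (x (h j))) \<longlonglongrightarrow> 0 + grad a"
    by (intro tendsto_add gx)
  then have gh: "(\<lambda>j. g (h j)) \<longlonglongrightarrow> grad a" by simp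
  have eh: "(\<lambda>j. eps (h j)) \<longlonglongrightarrow> 0" and rrh: "(\<lambda>j. r (h j)) \<longlonglongrightarrow> 0"
    using LIMSEQ_subseq_LIMSEQ[OF _ h(1)] eps_r_lim by (auto simp: o_def)
  have sh: "(\<lambda>j. s (h j)) \<longlonglongrightarrow> 0" using LIMSEQ_subseq_LIMSEQ[OF s_lim h(1)] by (simp add: o_def)
  have l1: "(\<lambda>j. norm (g (h j)) - r (h j) - eps (h j)) \<longlonglongrightarrow> G - 0 - 0"
    unfolding G_def by (intro tendsto_diff tendsto_norm gh rrh eh)
  have l2: "(\<lambda>j. norm (g (h j)) - eps (h j)) \<longlonglongrightarrow> G - 0"
    unfolding G_def by (intro tendsto_diff tendsto_norm gh eh)
  have "G/2 > 0" using G by simp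
  then obtain \<epsilon>0 where \<epsilon>0: "\<epsilon>0 > 0"
    "\<forall>k. dist (x k) a < 1/2 \<longrightarrow> d k \<noteq> 0 \<longrightarrow> s k < \<epsilon>0 \<longrightarrow> norm (d k) < G/2"
    using KL by blast
  have e1: "eventually (\<lambda>j. dist (x (h j)) a < 1/2) sequentially"
    using h(2) by (intro tendstoD) (auto simp: o_def)
  have e2: "eventually (\<lambda>j. s (h j) < \<epsilon>0) sequentially"
    using order_tendstoD(2)[OF sh \<epsilon>0(1)] .
  have e3: "eventually (\<lambda>j. 0 < norm (g (h j)) - r (h j) - eps (h j)) sequentially"
  proof -
    have "0 < G - 0 - 0" using G by simp
    from order_tendstoD(1)[OF l1 this] show ?thesis .
  qed
  have e4: "eventually (\<lambda>j. G/2 < norm (g (h j)) - eps (h j)) sequentially"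
  proof -
    have "G/2 < G - 0" using G by simp
    from order_tendstoD(1)[OF l2 this] show ?thesis .
  qed
  have "eventually (\<lambda>j. dist (x (h j)) a < 1/2 \<and> s (h j) < \<epsilon>0 \<and>
      0 < norm (g (h j)) - r (h j) - eps (h j) \<and> G/2 < norm (g (h j)) - eps (h j)) sequentially"
    using e1 e2 e3 e4 by eventually_elim auto
  then obtain j where j: "dist (x (h j)) a < 1/2" "s (h j) < \<epsilon>0"
      "0 < norm (g (h j)) - r (h j) - eps (h j)" "G/2 < norm (g (h j)) - eps (h j)"
    using eventually_happens'[OF sequentially_bot] by blast
  have nz: "d (h j) \<noteq> 0" using j(3) null_iff by force
  have "norm (d (h j)) < G/2" using \<epsilon>0(2) j(1,2) nz by blast
  moreover have "norm (d (h j)) = norm (g (h j)) - eps (h j)" using nonnull(5)[OF nz] .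
  ultimately show False using j(4) by simp
qed

theorem main:
  "(decseq eps \<and> eps \<longlonglongrightarrow> 0 \<and> decseq r \<and> r \<longlonglongrightarrow> 0)
    \<and> (\<forall>a \<in> acc_points x. grad a = 0)
    \<and> (bounded (range x) \<longrightarrow>
         acc_points x \<noteq> {} \<and> compact (acc_points x) \<and> connected (acc_points x))
    \<and> (\<forall>a \<in> acc_points x. (\<exists>e>0. \<forall>b \<in> acc_points x. dist b a < e \<longrightarrow> b = a)
         \<longrightarrow> x \<longlonglongrightarrow> a)"
proof -
  have i1: "\<forall>a \<in> acc_points x. grad a = 0" using stationary by blast
  have i2: "bounded (range x) \<longrightarrow>
         acc_points x \<noteq> {} \<and> compact (acc_points x) \<and> connected (acc_points x)"
    using acc_points_bounded[OF _ steps] by blast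
  have i3: "\<forall>a \<in> acc_points x. (\<exists>e>0. \<forall>b \<in> acc_points x. dist b a < e \<longrightarrow> b = a)
         \<longrightarrow> x \<longlonglongrightarrow> a"
  proof (intro ballI impI)
    fix a assume a: "a \<in> acc_points x" and "\<exists>e>0. \<forall>b \<in> acc_points x. dist b a < e \<longrightarrow> b = a"
    then obtain e where "e > 0" "\<forall>b \<in> acc_points x. dist b a < e \<longrightarrow> b = a" by blast
    then show "x \<longlonglongrightarrow> a" using isolated_acc_conv[OF steps a] by blast
  qed
  show ?thesis using eps_r_lim i1 i2 i3 by blast
qed

end

theorem mainTheorem10:
  fixes f :: "'a::euclidean_space \<Rightarrow> real"
    and grad :: "'a \<Rightarrow> 'a"
    and x g d :: "nat \<Rightarrow> 'a"
    and eps r t rho :: "nat \<Rightarrow> real"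
    and \<mu> \<theta> \<beta> \<gamma> \<tau> :: real
  assumes f_grad: "\<And>y. (f has_derivative (\<lambda>h. grad y \<bullet> h)) (at y)"
    and grad_cont: "continuous_on UNIV grad"
    and eps0: "eps 0 > 0" and r0: "r 0 > 0"
    and mu: "0 < \<mu>" "\<mu> < 1" and theta: "0 < \<theta>" "\<theta> < 1"
    and rho_pos: "\<And>k. rho k > 0"
    and beta: "0 < \<beta>" "\<beta> < 1" and gamma: "0 < \<gamma>" "\<gamma> < 1"
    and tau: "0 < \<tau>" "\<tau> < 1"
    and step1: "\<And>k. norm (g k - grad (x k)) \<le> min (eps k) (rho k)"
    and step2: "\<And>k. if norm (g k) \<le> r k + eps k
        then r (Suc k) = \<mu> * r k \<and> eps (Suc k) = \<theta> * eps k \<and> d k = 0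
        else r (Suc k) = r k \<and> eps (Suc k) = eps k \<and>
             d k = - (((norm (g k) - eps k) / norm (g k)) *\<^sub>R g k)"
    and stepsize: "\<And>k. if d k = 0 then t k = \<tau>
        else (\<exists>j::nat. t k = \<gamma> ^ j \<and> armijo f \<beta> (x k) (d k) (\<gamma> ^ j) \<and>
                 (\<forall>i<j. \<not> armijo f \<beta> (x k) (d k) (\<gamma> ^ i)))"
    and update: "\<And>k. x (Suc k) = x k + t k *\<^sub>R d k"
    and f_bdd: "bdd_below (range (\<lambda>k. f (x k)))"
    and rho_lim: "rho \<longlonglongrightarrow> 0"
  shows "(decseq eps \<and> eps \<longlonglongrightarrow> 0 \<and> decseq r \<and> r \<longlonglongrightarrow> 0)
    \<and> (\<forall>a \<in> acc_points x. grad a = 0)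
    \<and> (bounded (range x) \<longrightarrow>
         acc_points x \<noteq> {} \<and> compact (acc_points x) \<and> connected (acc_points x))
    \<and> (\<forall>a \<in> acc_points x. (\<exists>e>0. \<forall>b \<in> acc_points x. dist b a < e \<longrightarrow> b = a)
         \<longrightarrow> x \<longlonglongrightarrow> a)"
proof -
  interpret irg f grad x g d eps r t rho \<mu> \<theta> \<beta> \<gamma> \<tau>
    by (rule irg.intro) (fact assms)+
  show ?thesis by (rule main)
qed

end
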